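(* Let $N\ge2$, $d\ge1$, let $S\subset\mathbb{Z}_N^d$ be a nonempty Salem set at level $\Lambda_{\text{Salem}}>0$, and let $f:\mathbb{Z}_N^d\to\mathbb{C}$ be supported in $E\subset\mathbb{Z}_N^d$. Suppose $$|E|\cdot|S|^{3/4}<\frac12\,N^d\sqrt{\frac{1-\mathrm{dens}(S)}{\Lambda_{\text{Salem}}}},\qquad \mathrm{dens}(S)=N^{-d}|S|.$$ Then $f$ is uniquely determined by the values $\hat f(m)$, $m\notin S$, among signals with at most $|E|$ nonzero entries: if $g:\mathbb{Z}_N^d\to\mathbb{C}$ satisfies $|\{x:g(x)\ne0\}|\le|E|$ and $\hat g(m)=\hat f(m)$ for all $m\notin S$, then $g=f$.
   Context: $\chi(t)=e^{2\pi i t/N}$, $\hat f(m)=N^{-d}\sum_{x\in\mathbb{Z}_N^d}\chi(-x\cdot m)f(x)$. Sets are identified with indicator functions, so $\hat S(z)=N^{-d}\sum_{x\in S}\chi(-x\cdot z)$. A set $S\subset\mathbb{Z}_N^d$ is a Salem set at level $\Lambda_{\text{Salem}}$ if $|\hat S(z)|\le\Lambda_{\text{Salem}}N^{-d}|S|^{1/2}$ for all $z\ne0$. The set $S$ is the set of unobserved frequencies. *)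

theory Defs
  imports "HOL-Analysis.Analysis"
begin

text \<open>Points of Z_N^d are represented as functions nat => nat with
  coordinates x i < N for i < d and x i = 0 for i >= d.\<close>
definition ZNd :: "nat \<Rightarrow> nat \<Rightarrow> (nat \<Rightarrow> nat) set" where
  "ZNd N d = {x. (\<forall>i<d. x i < N) \<and> (\<forall>i\<ge>d. x i = 0)}"

definition dotp :: "nat \<Rightarrow> (nat \<Rightarrow> nat) \<Rightarrow> (nat \<Rightarrow> nat) \<Rightarrow> int" where
  "dotp d x m = (\<Sum>i<d. int (x i) * int (m i))"

definition chi :: "nat \<Rightarrow> int \<Rightarrow> complex" where
  "chi N t = exp (2 * pi * \<i> * of_int t / of_nat N)"

definition fourier :: "nat \<Rightarrow> nat \<Rightarrow> ((nat \<Rightarrow> nat) \<Rightarrow> complex) \<Rightarrow> (nat \<Rightarrow> nat) \<Rightarrow> complex" where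
  "fourier N d f m = (1 / of_nat N ^ d) * (\<Sum>x\<in>ZNd N d. chi N (- dotp d x m) * f x)"

definition indic :: "(nat \<Rightarrow> nat) set \<Rightarrow> (nat \<Rightarrow> nat) \<Rightarrow> complex" where
  "indic S x = (if x \<in> S then 1 else 0)"

definition salem :: "nat \<Rightarrow> nat \<Rightarrow> real \<Rightarrow> (nat \<Rightarrow> nat) set \<Rightarrow> bool" where
  "salem N d \<Lambda> S \<longleftrightarrow> S \<subseteq> ZNd N d \<and>
     (\<forall>z\<in>ZNd N d. z \<noteq> (\<lambda>_. 0) \<longrightarrow>
        cmod (fourier N d (indic S) z) \<le> \<Lambda> / real N ^ d * sqrt (real (card S)))"

definition dens :: "nat \<Rightarrow> nat \<Rightarrow> (nat \<Rightarrow> nat) set \<Rightarrow> real" where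
  "dens N d S = real (card S) / real N ^ d"

end

theory Submission imports Defs "HOL-Number_Theory.Cong" begin

lemma chi_add: "chi N (a + b) = chi N a * chi N b"
  unfolding chi_def by (simp add: distrib_left add_divide_distrib exp_add)

lemma chi_0[simp]: "chi N 0 = 1" unfolding chi_def by simp

lemma chi_norm[simp]: "cmod (chi N t) = 1"
  unfolding chi_def by (simp add: norm_exp_eq_Re)

lemma chi_mult_N: assumes "N > 0" shows "chi N (int N * k) = 1"
proof -
  have "2 * pi * \<i> * of_int (int N * k) / of_nat N = (2 * of_int k * pi) * \<i>"
    using assms by (simp add: field_simps)
  then show ?thesis unfolding chi_def using exp_integer_2pi[of "of_int k"] by simp
qed

lemma chi_cong: assumes "N > 0" "[a = b] (mod int N)" shows "chi N a = chi N b"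
proof -
  obtain k where "a = b + int N * k" using assms(2)
    by (metis cong_iff_lin cong_sym)
  then show ?thesis using chi_add chi_mult_N[OF assms(1)] by simp
qed

lemma chi_sum: "finite A \<Longrightarrow> chi N (sum f A) = (\<Prod>i\<in>A. chi N (f i))"
  by (induct A rule: finite_induct) (auto simp: chi_add)

lemma chi_pow: "chi N (a * int k) = chi N a ^ k"
  by (induct k) (auto simp: distrib_left chi_add)

lemma chi_geom:
  assumes "N > 0" "\<bar>a\<bar> < int N"
  shows "(\<Sum>k<N. chi N (a * int k)) = (if a = 0 then of_nat N else 0)"
proof (cases "a = 0")
  case True then show ?thesis by simp
next
  case False
  have ne: "chi N a \<noteq> 1"
  proof
    assume "chi N a = 1"
    then obtain n :: int where n: "Im (2 * pi * \<i> * of_int a / of_nat N) = of_int (2*n) * pi"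
      unfolding chi_def exp_eq_1 by blast
    have "2 * pi * real_of_int a / real N = of_int (2*n) * pi" using n by simp
    then have "real_of_int a = real_of_int n * real N" using assms(1) by (simp add: field_simps)
    then have "a = n * int N" by (metis of_int_eq_iff of_int_mult of_int_of_nat_eq)
    moreover have "n \<noteq> 0" using False \<open>a = n * int N\<close> by auto
    ultimately have "\<bar>a\<bar> = \<bar>n\<bar> * int N" by (simp add: abs_mult)
    also have "\<dots> \<ge> int N" using \<open>n \<noteq> 0\<close> by (simp add: mult_le_cancel_right1, linarith)
    finally show False using assms(2) by simp
  qed
  have "chi N a ^ N = 1" using chi_pow[of N a N] chi_mult_N[OF assms(1), of a] by (simp add: mult.commute)
  then show ?thesis using ne False by (simp add: chi_pow sum_gp_strict)
qed

lemma ZNd_0: "ZNd N 0 = {\<lambda>_. 0}"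
  unfolding ZNd_def by auto

lemma ZNd_Suc: "ZNd N (Suc d) = (\<lambda>(m,k). m(d:=k)) ` (ZNd N d \<times> {..<N})"
proof
  show "ZNd N (Suc d) \<subseteq> (\<lambda>(m,k). m(d:=k)) ` (ZNd N d \<times> {..<N})"
  proof
    fix x assume x: "x \<in> ZNd N (Suc d)"
    have "x = (\<lambda>(m,k). m(d:=k)) (x(d:=0), x d)" by simp
    moreover have "(x(d:=0), x d) \<in> ZNd N d \<times> {..<N}" using x unfolding ZNd_def by auto
    ultimately show "x \<in> (\<lambda>(m,k). m(d:=k)) ` (ZNd N d \<times> {..<N})" by blast
  qed
  show "(\<lambda>(m,k). m(d:=k)) ` (ZNd N d \<times> {..<N}) \<subseteq> ZNd N (Suc d)"
    unfolding ZNd_def by (auto simp: less_Suc_eq)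
qed

lemma ZNd_inj: "inj_on (\<lambda>(m,k). m(d:=k)) (ZNd N d \<times> {..<N})"
proof (rule inj_onI, clarify)
  fix m k m' k' assume a: "m \<in> ZNd N d" "m' \<in> ZNd N d" "m(d := k) = m'(d := k')"
  have "k = k'" using fun_cong[OF a(3), of d] by simp
  moreover have "m = m'"
  proof
    fix i show "m i = m' i"
      using fun_cong[OF a(3), of i] a(1,2) unfolding ZNd_def by (cases "i = d") auto
  qed
  ultimately show "m = m' \<and> k = k'" by simp
qed

lemma finite_ZNd: "finite (ZNd N d)"
  by (induct d) (auto simp: ZNd_0 ZNd_Suc)

lemma sum_ZNd_prod:
  "(\<Sum>m\<in>ZNd N d. \<Prod>i<d. (\<phi> i (m i) :: complex)) = (\<Prod>i<d. \<Sum>k<N. \<phi> i k)"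
proof (induct d)
  case 0 then show ?case by (simp add: ZNd_0)
next
  case (Suc d)
  have "(\<Sum>m\<in>ZNd N (Suc d). \<Prod>i<Suc d. \<phi> i (m i))
      = (\<Sum>p\<in>ZNd N d \<times> {..<N}. \<Prod>i<Suc d. \<phi> i (((\<lambda>(m,k). m(d:=k)) p) i))"
    unfolding ZNd_Suc by (rule sum.reindex[OF ZNd_inj, unfolded comp_def])
  also have "\<dots> = (\<Sum>p\<in>ZNd N d \<times> {..<N}. (\<Prod>i<d. \<phi> i (fst p i)) * \<phi> d (snd p))"
    by (rule sum.cong) (auto intro!: prod.cong)
  also have "\<dots> = (\<Sum>m\<in>ZNd N d. \<Sum>k<N. (\<Prod>i<d. \<phi> i (m i)) * \<phi> d k)"
    unfolding sum.cartesian_product by (simp add: case_prod_beta)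
  also have "\<dots> = (\<Sum>m\<in>ZNd N d. \<Prod>i<d. \<phi> i (m i)) * (\<Sum>k<N. \<phi> d k)"
    by (rule sum_product[symmetric])
  finally show ?case using Suc by simp
qed

lemma orth:
  assumes "N > 0" "x \<in> ZNd N d" "y \<in> ZNd N d"
  shows "(\<Sum>m\<in>ZNd N d. chi N (dotp d x m - dotp d y m)) = (if x = y then of_nat N ^ d else 0)"
proof -
  have "(\<Sum>m\<in>ZNd N d. chi N (dotp d x m - dotp d y m))
      = (\<Sum>m\<in>ZNd N d. \<Prod>i<d. chi N ((int (x i) - int (y i)) * int (m i)))"
    unfolding dotp_def by (simp add: chi_sum sum_subtractf[symmetric] left_diff_distrib)
  also have "\<dots> = (\<Prod>i<d. \<Sum>k<N. chi N ((int (x i) - int (y i)) * int k))"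
    by (rule sum_ZNd_prod)
  also have "\<dots> = (\<Prod>i<d. if x i = y i then of_nat N else 0)"
    using assms unfolding ZNd_def proof (intro prod.cong refl)
    fix i assume i: "i \<in> {..<d}"
    have "x i < N" "y i < N" using assms i unfolding ZNd_def by auto
    then have "\<bar>int (x i) - int (y i)\<bar> < int N" by linarith
    then show "(\<Sum>k<N. chi N ((int (x i) - int (y i)) * int k)) = (if x i = y i then of_nat N else 0)"
      using chi_geom[OF assms(1)] by simp
  qed
  also have "\<dots> = (if x = y then of_nat N ^ d else 0)"
  proof (cases "x = y")
    case True then show ?thesis by simp
  next
    case False
    then obtain i where "x i \<noteq> y i" by auto
    then have "i < d" using assms unfolding ZNd_def by (metis (mono_tags, lifting) mem_Collect_eq not_less)
    then show ?thesis using False \<open>x i \<noteq> y i\<close> by (auto intro!: bexI[of _ i])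
  qed
  finally show ?thesis .
qed

definition K :: "nat \<Rightarrow> nat \<Rightarrow> (nat \<Rightarrow> nat) set \<Rightarrow> (nat \<Rightarrow> nat) \<Rightarrow> (nat \<Rightarrow> nat) \<Rightarrow> complex" where
  "K N d S x y = (\<Sum>m\<in>S. chi N (dotp d x m - dotp d y m))"

lemma K_diag: "K N d S x x = of_nat (card S)"
  unfolding K_def by simp

lemma K_bound: "cmod (K N d S x y) \<le> real (card S)"
proof -
  have "cmod (K N d S x y) \<le> (\<Sum>m\<in>S. cmod (chi N (dotp d x m - dotp d y m)))"
    unfolding K_def by (rule norm_sum)
  then show ?thesis by simp
qed

lemma K_salem:
  assumes N: "N > 0" and sal: "salem N d \<Lambda> S" and x: "x \<in> ZNd N d" and y: "y \<in> ZNd N d"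
    and xy: "x \<noteq> y"
  shows "cmod (K N d S x y) \<le> \<Lambda> * sqrt (real (card S))"
proof -
  define z where "z = (\<lambda>i. if i < d then (y i + N - x i) mod N else 0)"
  have zZ: "z \<in> ZNd N d" unfolding z_def ZNd_def using N by auto
  obtain i where "x i \<noteq> y i" using xy by auto
  then have i: "i < d" using x y unfolding ZNd_def by (metis (mono_tags, lifting) mem_Collect_eq not_less)
  have xi: "x i < N" "y i < N" using i x y unfolding ZNd_def by auto
  have "z i \<noteq> 0"
  proof
    assume "z i = 0"
    then have "(y i + N - x i) mod N = 0" using i by (simp add: z_def)
    then have "N dvd (y i + N - x i)" by auto
    moreover have "0 < y i + N - x i" "y i + N - x i < 2 * N" using xi by auto
    ultimately have "y i + N - x i = N"
    proof -
      obtain k where k: "y i + N - x i = N * k" using \<open>N dvd _\<close> by blast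
      then have "0 < k" "k < 2" using \<open>0 < y i + N - x i\<close> \<open>y i + N - x i < 2 * N\<close> by (auto simp: mult.commute)
      then have "k = 1" by linarith
      then show ?thesis using k by simp
    qed
    then show False using \<open>x i \<noteq> y i\<close> xi by auto
  qed
  then have z0: "z \<noteq> (\<lambda>_. 0)" by auto
  have SZ: "S \<subseteq> ZNd N d" using sal unfolding salem_def by auto
  have zc: "[int (z j) = int (y j) - int (x j)] (mod int N)" if "j < d" for j
  proof -
    have "x j < N" using x that unfolding ZNd_def by auto
    then have "int (z j) = (int (y j) + int N - int (x j)) mod int N"
      using that by (simp add: z_def of_nat_mod of_nat_diff)
    then have "[int (z j) = int (y j) + int N - int (x j)] (mod int N)"
      by (simp add: cong_def)
    moreover have "[int (y j) + int N - int (x j) = int (y j) - int (x j)] (mod int N)"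
    proof -
      have "int (y j) + int N - int (x j) = (int (y j) - int (x j)) + int N * 1" by simp
      then show ?thesis by (metis cong_iff_lin cong_sym)
    qed
    ultimately show ?thesis by (rule cong_trans)
  qed
  have chieq: "chi N (- dotp d m z) = chi N (dotp d x m - dotp d y m)" for m
  proof (rule chi_cong[OF N])
    have "[dotp d m z = (\<Sum>j<d. int (m j) * (int (y j) - int (x j)))] (mod int N)"
      unfolding dotp_def by (rule cong_sum, rule cong_mult, auto intro: zc)
    then have "[- dotp d m z = - (\<Sum>j<d. int (m j) * (int (y j) - int (x j)))] (mod int N)"
      by (rule cong_minus_minus_iff[THEN iffD2])
    moreover have "- (\<Sum>j<d. int (m j) * (int (y j) - int (x j))) = dotp d x m - dotp d y m"
      unfolding dotp_def by (simp add: sum_subtractf[symmetric] algebra_simps sum_negf[symmetric])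
    ultimately show "[- dotp d m z = dotp d x m - dotp d y m] (mod int N)" by simp
  qed
  have "fourier N d (indic S) z = 1 / of_nat N ^ d * (\<Sum>m\<in>ZNd N d. if m \<in> S then chi N (- dotp d m z) else 0)"
    unfolding fourier_def indic_def by (intro arg_cong2[where f="(*)"] refl sum.cong) auto
  also have "(\<Sum>m\<in>ZNd N d. if m \<in> S then chi N (- dotp d m z) else 0) = (\<Sum>m\<in>S. chi N (- dotp d m z))"
    using SZ finite_ZNd by (simp add: sum.If_cases Int_absorb1)
  also have "\<dots> = K N d S x y" unfolding K_def using chieq by simp
  finally have fz: "fourier N d (indic S) z = K N d S x y / of_nat N ^ d" by simp
  have "cmod (fourier N d (indic S) z) \<le> \<Lambda> / real N ^ d * sqrt (real (card S))"
    using sal zZ z0 unfolding salem_def by blast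
  then have "cmod (K N d S x y) / real N ^ d \<le> \<Lambda> / real N ^ d * sqrt (real (card S))"
    using fz by (simp add: norm_divide norm_power)
  then show ?thesis using N by (simp add: field_simps)
qed

lemma inversion:
  assumes N: "N > 0" and SZ: "S \<subseteq> ZNd N d" and vanish: "\<forall>m\<in>ZNd N d - S. fourier N d h m = 0"
    and x: "x \<in> ZNd N d"
  shows "of_nat N ^ d * h x = (\<Sum>y\<in>ZNd N d. h y * K N d S x y)"
proof -
  define T where "T m = (\<Sum>y\<in>ZNd N d. chi N (- dotp d y m) * h y)" for m
  have T0: "T m = 0" if "m \<in> ZNd N d - S" for m
    using vanish that N unfolding fourier_def T_def by auto
  have prod: "chi N (dotp d x m) * (chi N (- dotp d y m) * h y) = chi N (dotp d x m - dotp d y m) * h y" for m y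
    by (simp add: chi_add[symmetric])
  have "(\<Sum>m\<in>ZNd N d. chi N (dotp d x m) * T m)
      = (\<Sum>m\<in>ZNd N d. \<Sum>y\<in>ZNd N d. chi N (dotp d x m - dotp d y m) * h y)"
    unfolding T_def by (simp add: sum_distrib_left prod)
  also have "\<dots> = (\<Sum>y\<in>ZNd N d. h y * (\<Sum>m\<in>ZNd N d. chi N (dotp d x m - dotp d y m)))"
    by (subst sum.swap) (simp add: sum_distrib_left mult.commute)
  also have "\<dots> = (\<Sum>y\<in>ZNd N d. if y = x then h x * of_nat N ^ d else 0)"
    by (rule sum.cong) (auto simp: orth[OF N x])
  also have "\<dots> = of_nat N ^ d * h x" using x finite_ZNd by (simp add: mult.commute)
  finally have e1: "(\<Sum>m\<in>ZNd N d. chi N (dotp d x m) * T m) = of_nat N ^ d * h x" .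
  have "(\<Sum>m\<in>ZNd N d. chi N (dotp d x m) * T m) = (\<Sum>m\<in>S. chi N (dotp d x m) * T m)"
    by (rule sum.mono_neutral_right[OF finite_ZNd SZ]) (auto simp: T0)
  also have "\<dots> = (\<Sum>m\<in>S. \<Sum>y\<in>ZNd N d. chi N (dotp d x m - dotp d y m) * h y)"
    unfolding T_def by (simp add: sum_distrib_left prod)
  also have "\<dots> = (\<Sum>y\<in>ZNd N d. h y * K N d S x y)"
    unfolding K_def by (subst sum.swap) (simp add: sum_distrib_left mult.commute)
  finally show ?thesis using e1 by simp
qed

lemma final_arith:
  fixes n s c e \<Lambda> :: real
  assumes n: "n > 0" and s: "s > 0" and L: "\<Lambda> > 0" and e: "e \<ge> 0"
    and ce: "c \<le> 2 * e" and c0: "c \<ge> 0"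
    and b1: "n \<le> c * s" and b2: "n - s \<le> c * (\<Lambda> * sqrt s)"
    and hyp: "e * s powr (3/4) < 1/2 * n * sqrt ((1 - s / n) / \<Lambda>)"
  shows False
proof -
  have "0 \<le> e * s powr (3/4)" using e by simp
  then have "sqrt ((1 - s / n) / \<Lambda>) > 0" using hyp n
    by (smt (verit) mult_nonneg_nonpos mult_pos_pos divide_pos_pos)
  then have "(1 - s / n) / \<Lambda> > 0" by simp
  then have q: "1 - s / n > 0" using L by (simp add: zero_less_divide_iff)
  then have ns: "n - s > 0" using n by (simp add: field_simps)
  have pw1: "s powr (3/4) * s powr (3/4) = s powr (3/2)"
    by (simp add: powr_add[symmetric])
  have pw2: "s powr (3/2) = s * sqrt s"
    using powr_add[of s 1 "1/2"] s by (simp add: powr_half_sqrt)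
  have pw: "s powr (3/4) * s powr (3/4) = s * sqrt s" using pw1 pw2 by simp
  have "(e * s powr (3/4))^2 < (1/2 * n * sqrt ((1 - s / n) / \<Lambda>))^2"
    using hyp \<open>0 \<le> e * s powr (3/4)\<close> by (intro power_strict_mono) auto
  also have "\<dots> = 1/4 * n^2 * ((1 - s / n) / \<Lambda>)"
    using \<open>(1 - s / n) / \<Lambda> > 0\<close> by (simp add: power_mult_distrib power_divide real_sqrt_pow2 less_imp_le)
  also have "\<dots> = n * (n - s) / (4 * \<Lambda>)" using n L by (simp add: field_simps power2_eq_square)
  finally have h1: "e^2 * (s * sqrt s) * (4 * \<Lambda>) < n * (n - s)"
    using L pw by (simp add: power_mult_distrib power2_eq_square field_simps)
  have "n * (n - s) \<le> (c * s) * (c * (\<Lambda> * sqrt s))"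
    using b1 b2 n ns by (intro mult_mono) auto
  also have "\<dots> = c^2 * (s * sqrt s) * \<Lambda>" by (simp add: power2_eq_square)
  also have "\<dots> \<le> (2*e)^2 * (s * sqrt s) * \<Lambda>"
    using ce c0 s L by (intro mult_right_mono power_mono) auto
  finally show False using h1 by (simp add: power2_eq_square)
qed

theorem theorem4:
  fixes N d :: nat and \<Lambda> :: real and S E :: "(nat \<Rightarrow> nat) set"
    and f :: "(nat \<Rightarrow> nat) \<Rightarrow> complex"
  assumes "N \<ge> 2" and "d \<ge> 1"
    and "S \<noteq> {}" and "\<Lambda> > 0" and "salem N d \<Lambda> S"
    and "E \<subseteq> ZNd N d"
    and "\<forall>x\<in>ZNd N d. x \<notin> E \<longrightarrow> f x = 0"
    and "real (card E) * real (card S) powr (3/4)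
           < 1/2 * real N ^ d * sqrt ((1 - dens N d S) / \<Lambda>)"
  shows "\<forall>g :: (nat \<Rightarrow> nat) \<Rightarrow> complex.
           card {x\<in>ZNd N d. g x \<noteq> 0} \<le> card E \<and>
           (\<forall>m\<in>ZNd N d - S. fourier N d g m = fourier N d f m)
           \<longrightarrow> (\<forall>x\<in>ZNd N d. g x = f x)"
proof (intro allI impI ballI)
  fix g :: "(nat \<Rightarrow> nat) \<Rightarrow> complex" and x0
  assume A: "card {x\<in>ZNd N d. g x \<noteq> 0} \<le> card E \<and>
           (\<forall>m\<in>ZNd N d - S. fourier N d g m = fourier N d f m)"
    and x0: "x0 \<in> ZNd N d"
  show "g x0 = f x0"
  proof (rule ccontr)
    assume ne: "g x0 \<noteq> f x0"
    have N: "N > 0" using assms(1) by simp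
    have SZ: "S \<subseteq> ZNd N d" using assms(5) unfolding salem_def by auto
    have finS: "finite S" using SZ finite_ZNd finite_subset by blast
    have finE: "finite E" using assms(6) finite_ZNd finite_subset by blast
    define h where "h x = g x - f x" for x
    have vanish: "\<forall>m\<in>ZNd N d - S. fourier N d h m = 0"
    proof
      fix m assume "m \<in> ZNd N d - S"
      then have "fourier N d g m = fourier N d f m" using A by blast
      then show "fourier N d h m = 0"
        unfolding fourier_def h_def by (simp add: right_diff_distrib sum_subtractf)
    qed
    define F where "F = {x\<in>ZNd N d. h x \<noteq> 0}"
    have FZ: "F \<subseteq> ZNd N d" unfolding F_def by auto
    have finF: "finite F" using FZ finite_ZNd finite_subset by blast
    have "F \<subseteq> {x\<in>ZNd N d. g x \<noteq> 0} \<union> E"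
      unfolding F_def h_def using assms(7) by auto
    then have "card F \<le> card ({x\<in>ZNd N d. g x \<noteq> 0} \<union> E)"
      using finE finite_ZNd by (intro card_mono) auto
    also have "\<dots> \<le> card {x\<in>ZNd N d. g x \<noteq> 0} + card E" by (rule card_Un_le)
    finally have cF: "card F \<le> 2 * card E" using A by simp
    define L where "L = (\<Sum>y\<in>ZNd N d. cmod (h y))"
    have LF: "L = (\<Sum>y\<in>F. cmod (h y))"
      unfolding L_def by (rule sum.mono_neutral_right[OF finite_ZNd FZ]) (auto simp: F_def)
    have x0F: "x0 \<in> F" using x0 ne unfolding F_def h_def by auto
    have Lpos: "L > 0" unfolding LF
      using x0F finF by (intro sum_pos2[of _ x0]) (auto simp: F_def)
    define n where "n = real N ^ d"
    define s where "s = real (card S)"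
    have npos: "n > 0" unfolding n_def using N by simp
    have spos: "s > 0" unfolding s_def using assms(3) finS by (simp add: card_gt_0_iff)
    have b: "n * cmod (h x) \<le> s * L" if x: "x \<in> ZNd N d" for x
    proof -
      have "n * cmod (h x) = cmod (of_nat N ^ d * h x)" unfolding n_def by (simp add: norm_mult norm_power)
      also have "\<dots> = cmod (\<Sum>y\<in>ZNd N d. h y * K N d S x y)" using inversion[OF N SZ vanish x] by simp
      also have "\<dots> \<le> (\<Sum>y\<in>ZNd N d. cmod (h y * K N d S x y))" by (rule norm_sum)
      also have "\<dots> \<le> (\<Sum>y\<in>ZNd N d. cmod (h y) * s)"
        unfolding s_def by (intro sum_mono) (simp add: norm_mult K_bound mult_left_mono)
      also have "\<dots> = s * L" unfolding L_def by (simp add: sum_distrib_left mult.commute)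
      finally show ?thesis .
    qed
    have a: "(n - s) * cmod (h x) \<le> \<Lambda> * sqrt s * L" if x: "x \<in> ZNd N d" for x
    proof -
      have "of_nat N ^ d * h x = h x * K N d S x x + (\<Sum>y\<in>ZNd N d - {x}. h y * K N d S x y)"
        using inversion[OF N SZ vanish x] x finite_ZNd by (simp add: sum.remove)
      then have eq: "(of_real (n - s)) * h x = (\<Sum>y\<in>ZNd N d - {x}. h y * K N d S x y)"
        unfolding n_def s_def by (simp add: K_diag algebra_simps)
      have "(n - s) * cmod (h x) \<le> cmod (of_real (n - s) * h x)"
        unfolding norm_mult norm_of_real by (intro mult_right_mono) auto
      also have "\<dots> \<le> (\<Sum>y\<in>ZNd N d - {x}. cmod (h y * K N d S x y))" unfolding eq by (rule norm_sum)
      also have "\<dots> \<le> (\<Sum>y\<in>ZNd N d - {x}. cmod (h y) * (\<Lambda> * sqrt s))"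
        unfolding s_def using K_salem[OF N assms(5) x] x
        by (intro sum_mono) (auto simp: norm_mult intro!: mult_left_mono)
      also have "\<dots> \<le> (\<Sum>y\<in>ZNd N d. cmod (h y) * (\<Lambda> * sqrt s))"
        using assms(4) spos finite_ZNd by (intro sum_mono2) auto
      also have "\<dots> = \<Lambda> * sqrt s * L" unfolding L_def by (simp add: sum_distrib_left mult.commute)
      finally show ?thesis .
    qed
    have "n * L = (\<Sum>x\<in>F. n * cmod (h x))" by (simp add: LF sum_distrib_left)
    also have "\<dots> \<le> (\<Sum>x\<in>F. s * L)" using FZ by (intro sum_mono b) auto
    finally have "n * L \<le> (\<Sum>x\<in>F. s * L)" .
    then have b1: "n \<le> real (card F) * s" using Lpos by (simp add: mult.commute)
    have "(n - s) * L = (\<Sum>x\<in>F. (n - s) * cmod (h x))" by (simp add: LF sum_distrib_left)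
    also have "\<dots> \<le> (\<Sum>x\<in>F. \<Lambda> * sqrt s * L)" using FZ by (intro sum_mono a) auto
    finally have "(n - s) * L \<le> (\<Sum>x\<in>F. \<Lambda> * sqrt s * L)" .
    then have b2: "n - s \<le> real (card F) * (\<Lambda> * sqrt s)" using Lpos by (simp add: mult.commute mult.left_commute)
    show False
    proof (rule final_arith[OF npos spos assms(4) _ _ _ b1 b2])
      show "real (card E) * s powr (3/4) < 1/2 * n * sqrt ((1 - s / n) / \<Lambda>)"
        using assms(8) unfolding n_def s_def dens_def .
      show "real (card F) \<le> 2 * real (card E)" using cF by linarith
    qed auto
  qed
qed
end
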